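(* Let $R=\begin{pmatrix} A & M\\ N & B\end{pmatrix}$ be a Morita context ring such that $MN$ is a nilpotent ideal of $A$ and $NM$ is a nilpotent ideal of $B$. Then $R$ is a CSNC ring if and only if both $A$ and $B$ are CSNC rings.
   Context: All rings are associative with identity $1$. For a ring $R$, $\mathrm{Id}(R)$, $U(R)$, $\mathrm{Nil}(R)$ denote the sets of idempotents, units and nilpotent elements. An element $a\in R$ is clean if $a=e+u$ for some $e\in\mathrm{Id}(R)$, $u\in U(R)$. An element $a$ is strongly nil-clean if $a=e+q$ with $e\in \mathrm{Id}(R)$, $q\in\mathrm{Nil}(R)$ and $eq=qe$. A ring $R$ is called CSNC if every clean element of $R$ is strongly nil-clean. A Morita context ring: $A,B$ are rings, $M$ is an $(A,B)$-bimodule, $N$ is a $(B,A)$-bimodule, and $\phi:M\otimes_B N\to A$, $\psi:N\otimes_A M\to B$ are bimodule homomorphisms satisfying $\phi(m\otimes n)m'=m\psi(n\otimes m')$ and $\psi(n\otimes m)n'=n\phi(m\otimes n')$; writing $mn=\phi(m\otimes n)$, $nm=\psi(n\otimes m)$, the set of matrices $\begin{pmatrix} a & m\\ n & b\end{pmatrix}$ with the usual matrix operations is an associative ring. $MN=\mathrm{Im}\,\phi$ and $NM=\mathrm{Im}\,\psi$ are the trace ideals. *)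

theory Defs
  imports Main
begin

definition idem_op :: "('r \<Rightarrow> 'r \<Rightarrow> 'r) \<Rightarrow> 'r \<Rightarrow> bool" where
  "idem_op mul e \<longleftrightarrow> mul e e = e"

definition unit_op :: "'r \<Rightarrow> ('r \<Rightarrow> 'r \<Rightarrow> 'r) \<Rightarrow> 'r \<Rightarrow> bool" where
  "unit_op one mul u \<longleftrightarrow> (\<exists>v. mul u v = one \<and> mul v u = one)"

definition nil_op :: "'r \<Rightarrow> 'r \<Rightarrow> ('r \<Rightarrow> 'r \<Rightarrow> 'r) \<Rightarrow> 'r \<Rightarrow> bool" where
  "nil_op zero one mul q \<longleftrightarrow> (\<exists>k::nat. (mul q ^^ k) one = zero)"

definition clean_op ::
  "'r \<Rightarrow> ('r \<Rightarrow> 'r \<Rightarrow> 'r) \<Rightarrow> ('r \<Rightarrow> 'r \<Rightarrow> 'r) \<Rightarrow> 'r \<Rightarrow> bool" where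
  "clean_op one add mul a \<longleftrightarrow>
     (\<exists>e u. idem_op mul e \<and> unit_op one mul u \<and> a = add e u)"

definition snc_op ::
  "'r \<Rightarrow> 'r \<Rightarrow> ('r \<Rightarrow> 'r \<Rightarrow> 'r) \<Rightarrow> ('r \<Rightarrow> 'r \<Rightarrow> 'r) \<Rightarrow> 'r \<Rightarrow> bool" where
  "snc_op zero one add mul a \<longleftrightarrow>
     (\<exists>e q. idem_op mul e \<and> nil_op zero one mul q \<and> mul e q = mul q e \<and> a = add e q)"

definition CSNC_op ::
  "'r \<Rightarrow> 'r \<Rightarrow> ('r \<Rightarrow> 'r \<Rightarrow> 'r) \<Rightarrow> ('r \<Rightarrow> 'r \<Rightarrow> 'r) \<Rightarrow> bool" where
  "CSNC_op zero one add mul \<longleftrightarrow>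
     (\<forall>a. clean_op one add mul a \<longrightarrow> snc_op zero one add mul a)"

definition CSNC :: "'a::ring_1 itself \<Rightarrow> bool" where
  "CSNC (_::'a itself) \<longleftrightarrow> CSNC_op (0::'a) 1 (+) (*)"

text \<open>M is an (A,B)-bimodule via lM, rM; N is a (B,A)-bimodule via lN, rN;
  phi, psi are the bimodule maps M (x)_B N -> A and N (x)_A M -> B, written
  as balanced biadditive maps (which is what a map out of the tensor product is).\<close>

definition bimodule ::
  "('a::ring_1 \<Rightarrow> 'm::ab_group_add \<Rightarrow> 'm) \<Rightarrow> ('m \<Rightarrow> 'b::ring_1 \<Rightarrow> 'm) \<Rightarrow> bool" where
  "bimodule l r \<longleftrightarrow>
     (\<forall>a m m'. l a (m + m') = l a m + l a m') \<and>
     (\<forall>a a' m. l (a + a') m = l a m + l a' m) \<and>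
     (\<forall>a a' m. l (a * a') m = l a (l a' m)) \<and>
     (\<forall>m. l 1 m = m) \<and>
     (\<forall>b m m'. r (m + m') b = r m b + r m' b) \<and>
     (\<forall>b b' m. r m (b + b') = r m b + r m b') \<and>
     (\<forall>b b' m. r m (b * b') = r (r m b) b') \<and>
     (\<forall>m. r m 1 = m) \<and>
     (\<forall>a m b. l a (r m b) = r (l a m) b)"

definition pairing ::
  "('a::ring_1 \<Rightarrow> 'm::ab_group_add \<Rightarrow> 'm) \<Rightarrow> ('m \<Rightarrow> 'b::ring_1 \<Rightarrow> 'm) \<Rightarrow>
   ('b \<Rightarrow> 'n::ab_group_add \<Rightarrow> 'n) \<Rightarrow> ('n \<Rightarrow> 'a \<Rightarrow> 'n) \<Rightarrow> ('m \<Rightarrow> 'n \<Rightarrow> 'a) \<Rightarrow> bool" where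
  "pairing lM rM lN rN phi \<longleftrightarrow>
     (\<forall>m m' n. phi (m + m') n = phi m n + phi m' n) \<and>
     (\<forall>m n n'. phi m (n + n') = phi m n + phi m n') \<and>
     (\<forall>m b n. phi (rM m b) n = phi m (lN b n)) \<and>
     (\<forall>a m n. phi (lM a m) n = a * phi m n) \<and>
     (\<forall>m n a. phi m (rN n a) = phi m n * a)"

definition morita_context ::
  "('a::ring_1 \<Rightarrow> 'm::ab_group_add \<Rightarrow> 'm) \<Rightarrow> ('m \<Rightarrow> 'b::ring_1 \<Rightarrow> 'm) \<Rightarrow>
   ('b \<Rightarrow> 'n::ab_group_add \<Rightarrow> 'n) \<Rightarrow> ('n \<Rightarrow> 'a \<Rightarrow> 'n) \<Rightarrow>
   ('m \<Rightarrow> 'n \<Rightarrow> 'a) \<Rightarrow> ('n \<Rightarrow> 'm \<Rightarrow> 'b) \<Rightarrow> bool" where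
  "morita_context lM rM lN rN phi psi \<longleftrightarrow>
     bimodule lM rM \<and> bimodule lN rN \<and>
     pairing lM rM lN rN phi \<and> pairing lN rN lM rM psi \<and>
     (\<forall>m n m'. lM (phi m n) m' = rM m (psi n m')) \<and>
     (\<forall>n m n'. lN (psi n m) n' = rN n (phi m n'))"

text \<open>The Morita context ring: elements (a, m, n, b) stand for the matrix [[a, m], [n, b]].\<close>

definition morita_add ::
  "('a::ring_1 \<times> 'm::ab_group_add \<times> 'n::ab_group_add \<times> 'b::ring_1) \<Rightarrow>
   ('a \<times> 'm \<times> 'n \<times> 'b) \<Rightarrow> ('a \<times> 'm \<times> 'n \<times> 'b)" where
  "morita_add x y = (case x of (a, m, n, b) \<Rightarrow> case y of (a', m', n', b') \<Rightarrow>
      (a + a', m + m', n + n', b + b'))"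

definition morita_mult ::
  "('a::ring_1 \<Rightarrow> 'm::ab_group_add \<Rightarrow> 'm) \<Rightarrow> ('m \<Rightarrow> 'b::ring_1 \<Rightarrow> 'm) \<Rightarrow>
   ('b \<Rightarrow> 'n::ab_group_add \<Rightarrow> 'n) \<Rightarrow> ('n \<Rightarrow> 'a \<Rightarrow> 'n) \<Rightarrow>
   ('m \<Rightarrow> 'n \<Rightarrow> 'a) \<Rightarrow> ('n \<Rightarrow> 'm \<Rightarrow> 'b) \<Rightarrow>
   ('a \<times> 'm \<times> 'n \<times> 'b) \<Rightarrow> ('a \<times> 'm \<times> 'n \<times> 'b) \<Rightarrow> ('a \<times> 'm \<times> 'n \<times> 'b)" where
  "morita_mult lM rM lN rN phi psi x y = (case x of (a, m, n, b) \<Rightarrow> case y of (a', m', n', b') \<Rightarrow>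
      (a * a' + phi m n', lM a m' + rM m b', rN n a' + lN b n', psi n m' + b * b'))"

definition morita_zero :: "'a::ring_1 \<times> 'm::ab_group_add \<times> 'n::ab_group_add \<times> 'b::ring_1" where
  "morita_zero = (0, 0, 0, 0)"

definition morita_one :: "'a::ring_1 \<times> 'm::ab_group_add \<times> 'n::ab_group_add \<times> 'b::ring_1" where
  "morita_one = (1, 0, 0, 1)"

definition morita_CSNC ::
  "('a::ring_1 \<Rightarrow> 'm::ab_group_add \<Rightarrow> 'm) \<Rightarrow> ('m \<Rightarrow> 'b::ring_1 \<Rightarrow> 'm) \<Rightarrow>
   ('b \<Rightarrow> 'n::ab_group_add \<Rightarrow> 'n) \<Rightarrow> ('n \<Rightarrow> 'a \<Rightarrow> 'n) \<Rightarrow>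
   ('m \<Rightarrow> 'n \<Rightarrow> 'a) \<Rightarrow> ('n \<Rightarrow> 'm \<Rightarrow> 'b) \<Rightarrow> bool" where
  "morita_CSNC lM rM lN rN phi psi \<longleftrightarrow>
     CSNC_op morita_zero morita_one morita_add (morita_mult lM rM lN rN phi psi)"

text \<open>Image of a map out of a tensor product: all finite sums of values on pure tensors.\<close>
definition trace_ideal :: "('m \<Rightarrow> 'n \<Rightarrow> 'a::ring_1) \<Rightarrow> 'a set" where
  "trace_ideal phi = {(\<Sum>i<k. phi (ms i) (ns i)) | (k::nat) ms ns. True}"

definition nilpotent_ideal :: "'a::ring_1 set \<Rightarrow> bool" where
  "nilpotent_ideal I \<longleftrightarrow>
     (\<exists>k::nat. \<forall>xs. length xs = k \<and> set xs \<subseteq> I \<longrightarrow> prod_list xs = 0)"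

end

theory Submission
  imports Defs "HOL-Computational_Algebra.Polynomial" "HOL-Library.Product_Plus"
begin



definition ev :: "int poly \<Rightarrow> 'r::ring_1 \<Rightarrow> 'r" where
  "ev p x = fold_coeffs (\<lambda>a f. of_int a + x * f) p 0"

lemma ev_0[simp]: "ev 0 x = 0" by (simp add: ev_def)

lemma ev_pCons[simp]: "ev (pCons a p) x = of_int a + x * ev p x"
  by (cases "p = 0 \<and> a = 0") (auto simp add: ev_def)

lemma ev_add[simp]: "ev (p + q) x = ev p x + ev q x"
proof (induction p arbitrary: q)
  case (pCons a p)
  then show ?case
    by (cases q) (simp add: algebra_simps)
qed auto

lemma ev_smult[simp]: "ev (smult a p) x = of_int a * ev p x"
proof (induction p)
  case (pCons b p)
  have c: "x * (of_int a * ev p x) = of_int a * (x * ev p x)"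
    by (metis mult.assoc mult_of_int_commute)
  show ?case using pCons by (simp add: c distrib_left)
qed simp

lemma ev_mult[simp]: "ev (p * q) x = ev p x * ev q x"
  by (induction p) (simp_all add: algebra_simps)

lemma ev_uminus[simp]: "ev (- p) x = - ev p x"
  by (induction p) simp_all

lemma ev_diff[simp]: "ev (p - q) x = ev p x - ev q x"
  using ev_add[of p "-q" x] by simp

lemma ev_one[simp]: "ev 1 x = 1"
  by (simp add: one_pCons)

lemma ev_of_int[simp]: "ev (of_int k) x = of_int k"
  by (simp add: of_int_poly)

lemma ev_numeral[simp]: "ev (numeral k) x = numeral k"
  using ev_of_int[of "numeral k" x] by simp

lemma ev_power[simp]: "ev (p ^ n) x = ev p x ^ n"
  by (induction n) simp_all

lemma ev_X[simp]: "ev [:0,1:] x = x"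
  by simp

lemma ev_comm: "ev p x * ev q x = ev q x * ev p x"
  by (metis ev_mult mult.commute)

lemma ev_in:
  assumes "\<And>a b. a \<in> S \<Longrightarrow> b \<in> S \<Longrightarrow> a + b \<in> S"
    and "\<And>a b. a \<in> S \<Longrightarrow> b \<in> S \<Longrightarrow> a * b \<in> S"
    and "\<And>a. a \<in> S \<Longrightarrow> - a \<in> S" and "1 \<in> S" and "0 \<in> S" and "x \<in> S"
  shows "ev p x \<in> S"
proof (induction p)
  case (pCons a p)
  have "of_int a \<in> S"
  proof (induction a rule: int_induct[where k=0])
    case base then show ?case using assms by simp
  next
    case (step1 i) then show ?case using assms(1)[of "of_int i" 1] assms(4) by simp
  next
    case (step2 i)
    have "of_int (i - 1) = of_int i + - (1::'a)" by simp
    then show ?case using step2 assms by (metis)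
  qed
  then show ?case using pCons assms by simp
qed (use assms in simp)

definition xp :: "int poly" where "xp = [:0,1:]"

fun nw :: "nat \<Rightarrow> int poly" where
  "nw 0 = xp"
| "nw (Suc j) = nw j + (nw j - nw j * nw j) * (2 * nw j - 1)"

lemma newton_id:
  fixes f :: "'c::comm_ring_1"
  shows "(f + (f - f*f)*(2*f-1)) - (f + (f - f*f)*(2*f-1)) * (f + (f - f*f)*(2*f-1))
       = (f - f*f)^2 * (3 + 4*(f - f*f))"
  by (simp add: algebra_simps power2_eq_square)

lemma nw_props:
  "(xp - xp*xp)^(2^j) dvd (nw j - nw j * nw j) \<and> (xp - xp*xp) dvd (nw j - xp)"
proof (induction j)
  case 0 then show ?case by simp
next
  case (Suc j)
  let ?t = "xp - xp*xp" and ?f = "nw j"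
  from Suc have d1: "?t^(2^j) dvd (?f - ?f*?f)" and d2: "?t dvd (?f - xp)" by auto
  have "?t^(2^Suc j) = (?t^(2^j))^2" by (simp add: power_mult[symmetric] mult.commute)
  also have "\<dots> dvd (?f - ?f*?f)^2" using d1 by (simp add: dvd_power_same)
  also have "\<dots> dvd (?f - ?f*?f)^2 * (3 + 4*(?f - ?f*?f))" by simp
  finally have A: "?t^(2^Suc j) dvd nw (Suc j) - nw (Suc j) * nw (Suc j)"
    using newton_id[of ?f] by simp
  have "?t dvd ?t^(2^j)" by (simp add: dvd_power)
  from dvd_trans[OF this d1] have "?t dvd (?f - ?f*?f)" .
  then have "?t dvd (?f - xp) + (?f - ?f*?f) * (2*?f - 1)" using d2 by simp
  then have B: "?t dvd nw (Suc j) - xp" by (simp add: algebra_simps)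
  from A B show ?case by simp
qed

lemma lift_ring:
  fixes r :: "'r::ring_1"
  assumes "(r - r*r)^N = 0"
  shows "\<exists>p h. ev p r * ev p r = ev p r \<and> ev p r - r = (r - r*r) * h \<and> (r - ev p r)^N = 0"
proof -
  let ?t = "xp - xp*xp"
  obtain g where g: "nw N - nw N * nw N = ?t^(2^N) * g" using nw_props[of N] by blast
  obtain h where h: "nw N - xp = ?t * h" using nw_props[of N] by blast
  have er: "ev ?t r = r - r*r" by (simp add: xp_def algebra_simps)
  have N: "N \<le> 2^N" by (simp add: less_imp_le)
  have "(r - r*r)^(2^N) = (r - r*r)^N * (r - r*r)^(2^N - N)"
    using N by (simp add: power_add[symmetric])
  also have "\<dots> = 0" using assms by simp
  finally have z: "(r - r*r)^(2^N) = 0" .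
  have "ev (nw N - nw N * nw N) r = 0" using g er z by simp
  then have i: "ev (nw N) r * ev (nw N) r = ev (nw N) r" by simp
  have "ev (nw N - xp) r = (r - r*r) * ev h r" using h er by simp
  then have d: "ev (nw N) r - r = (r - r*r) * ev h r" by (simp add: xp_def)
  have h2: "(xp - nw N)^N = (- h)^N * ?t^N"
  proof -
    have "xp - nw N = (- h) * ?t" using h by (simp add: algebra_simps)
    then show ?thesis by (simp only: power_mult_distrib)
  qed
  have "ev ((xp - nw N)^N) r = 0" unfolding h2 using er assms by simp
  then have "(r - ev (nw N) r)^N = 0" by (simp add: xp_def)
  with i d show ?thesis by blast
qed




lemma funpow_pow: "((*) q ^^ k) (1::'a::ring_1) = q^k"
  by (induction k) auto

lemma comm_pow: "x*y = y*x \<Longrightarrow> x * y^n = y^n * (x::'a::ring_1)"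
proof (induction n)
  case (Suc n)
  have "x * y^Suc n = (x*y)*y^n" by (simp only: power_Suc mult.assoc)
  also have "\<dots> = (y*x)*y^n" using Suc.prems by (simp only:)
  also have "\<dots> = y*(x*y^n)" by (simp only: mult.assoc)
  also have "\<dots> = y*(y^n*x)" by (simp only: Suc.IH[OF Suc.prems])
  also have "\<dots> = y^Suc n * x" by (simp only: power_Suc mult.assoc)
  finally show ?case .
qed simp

lemma comm_pow_mult: "x*y = y*x \<Longrightarrow> (x*y)^n = x^n * (y::'a::ring_1)^n"
proof (induction n)
  case (Suc n)
  have c: "y * x^n = x^n * y" using comm_pow[of y x n] Suc.prems by metis
  have "(x*y)^Suc n = x*(y*(x*y)^n)" by (simp add: mult.assoc)
  also have "\<dots> = x*(y*(x^n*y^n))" by (simp only: Suc.IH[OF Suc.prems])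
  also have "\<dots> = x*((y*x^n)*y^n)" by (simp only: mult.assoc)
  also have "\<dots> = x^Suc n * y^Suc n" unfolding c by (simp add: mult.assoc)
  finally show ?case .
qed simp

lemma snc_imp:
  fixes a :: "'a::ring_1"
  assumes "snc_op 0 1 (+) (*) a"
  shows "\<exists>k. (a - a*a)^k = 0"
proof -
  obtain e q k where e: "e*e = e" and q: "q^k = 0" and c: "e*q = q*e" and a: "a = e + q"
    using assms unfolding snc_op_def idem_op_def nil_op_def funpow_pow by blast
  have "a - a*a = q*(1 - e - e - q)" unfolding a using e c by (simp add: algebra_simps)
  moreover have "q*(1 - e - e - q) = (1 - e - e - q)*q" using c by (simp add: algebra_simps)
  ultimately have "(a - a*a)^k = q^k * (1 - e - e - q)^k" using comm_pow_mult by metis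
  then show ?thesis using q by auto
qed

lemma nil_snc:
  fixes a :: "'a::ring_1"
  assumes "(a - a*a)^k = 0"
  shows "snc_op 0 1 (+) (*) a"
proof -
  obtain p h where i: "ev p a * ev p a = ev p a" and n: "(a - ev p a)^k = 0"
    using lift_ring[OF assms] by blast
  have fa: "ev p a * a = a * ev p a" using ev_comm[of p a "[:0,1:]"] by simp
  have "ev p a * (a - ev p a) = (a - ev p a) * ev p a" using fa by (simp add: algebra_simps)
  then show ?thesis unfolding snc_op_def idem_op_def nil_op_def funpow_pow
    using i n by (intro exI[of _ "ev p a"] exI[of _ "a - ev p a"]) auto
qed

lemma snc_iff: "snc_op 0 1 (+) (*) (a::'a::ring_1) \<longleftrightarrow> (\<exists>k. (a - a*a)^k = 0)"
  using snc_imp nil_snc by blast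

lemma geom:
  fixes s :: "'a::ring_1"
  assumes "s^k = 0"
  shows "\<exists>w. (1 - s)*w = 1 \<and> w*(1 - s) = 1"
proof -
  have l: "(1 - s) * (\<Sum>i<n. s^i) = 1 - s^n" for n
  proof (induction n)
    case (Suc n)
    have "(1 - s) * (\<Sum>i<Suc n. s^i) = (1 - s) * (\<Sum>i<n. s^i) + (1 - s)*s^n"
      by (simp add: distrib_left)
    also have "\<dots> = 1 - s^Suc n" using Suc by (simp add: algebra_simps)
    finally show ?case .
  qed simp
  have r: "(\<Sum>i<n. s^i) * (1 - s) = 1 - s^n" for n
  proof (induction n)
    case (Suc n)
    have "(\<Sum>i<Suc n. s^i) * (1 - s) = (\<Sum>i<n. s^i) * (1 - s) + s^n * (1 - s)"
      by (simp add: distrib_right)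
    also have "\<dots> = 1 - s^Suc n" using Suc by (simp add: algebra_simps power_commutes)
    finally show ?case .
  qed simp
  show ?thesis using l[of k] r[of k] assms by auto
qed

lemma unit_of:
  fixes x :: "'a::ring_1"
  assumes "x*y = 1 - s" "s^k = 0" "y'*x = 1 - s'" "s'^k' = 0"
  shows "unit_op 1 (*) x"
proof -
  obtain w where w: "(1 - s)*w = 1" using geom[OF assms(2)] by blast
  obtain w' where w': "w'*(1 - s') = 1" using geom[OF assms(4)] by blast
  have R: "x*(y*w) = 1" using assms(1) w by (simp add: mult.assoc[symmetric])
  have L: "(w'*y')*x = 1" using assms(3) w' by (simp add: mult.assoc)
  have "w'*y' = (w'*y')*(x*(y*w))" using R by simp
  also have "\<dots> = y*w" using L by (simp add: mult.assoc[symmetric])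
  finally show ?thesis unfolding unit_op_def using R L by metis
qed

typedef (overloaded) ('a, 'm, 'n, 'b) endo =
  "{f :: ('a::ring_1 \<times> 'm::ab_group_add \<times> 'n::ab_group_add \<times> 'b::ring_1) \<Rightarrow> ('a \<times> 'm \<times> 'n \<times> 'b).
     \<forall>x y. f (x + y) = f x + f y}"
  morphisms rep Abs
  by (rule exI[of _ id]) simp

setup_lifting type_definition_endo

instantiation endo :: (ring_1, ab_group_add, ab_group_add, ring_1) ring_1
begin
lift_definition zero_endo :: "('a,'b,'c,'d) endo" is "\<lambda>x::'a \<times> 'b \<times> 'c \<times> 'd. (0::'a \<times> 'b \<times> 'c \<times> 'd)" by simp
lift_definition one_endo :: "('a,'b,'c,'d) endo" is "id::('a \<times> 'b \<times> 'c \<times> 'd \<Rightarrow> 'a \<times> 'b \<times> 'c \<times> 'd)" by simp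
lift_definition plus_endo :: "('a,'b,'c,'d) endo \<Rightarrow> ('a,'b,'c,'d) endo \<Rightarrow> ('a,'b,'c,'d) endo" is "\<lambda>(f::('a \<times> 'b \<times> 'c \<times> 'd \<Rightarrow> 'a \<times> 'b \<times> 'c \<times> 'd)) g x. f x + g x"
  by (simp add: algebra_simps)
lift_definition uminus_endo :: "('a,'b,'c,'d) endo \<Rightarrow> ('a,'b,'c,'d) endo" is "\<lambda>(f::('a \<times> 'b \<times> 'c \<times> 'd \<Rightarrow> 'a \<times> 'b \<times> 'c \<times> 'd)) x. - f x"
  by (simp add: algebra_simps)
lift_definition minus_endo :: "('a,'b,'c,'d) endo \<Rightarrow> ('a,'b,'c,'d) endo \<Rightarrow> ('a,'b,'c,'d) endo" is "\<lambda>(f::('a \<times> 'b \<times> 'c \<times> 'd \<Rightarrow> 'a \<times> 'b \<times> 'c \<times> 'd)) g x. f x - g x"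
  by (simp add: algebra_simps)
lift_definition times_endo :: "('a,'b,'c,'d) endo \<Rightarrow> ('a,'b,'c,'d) endo \<Rightarrow> ('a,'b,'c,'d) endo" is "\<lambda>(f::('a \<times> 'b \<times> 'c \<times> 'd \<Rightarrow> 'a \<times> 'b \<times> 'c \<times> 'd)) g. f \<circ> g"
  by simp
instance
proof
  fix a b c :: "('a,'b,'c,'d) endo"
  show "a * b * c = a * (b * c)" by transfer auto
  show "1 * a = a" by transfer auto
  show "a * 1 = a" by transfer auto
  show "a + b + c = a + (b + c)" by transfer (simp add: algebra_simps)
  show "a + b = b + a" by transfer (simp add: algebra_simps)
  show "0 + a = a" by transfer simp
  show "- a + a = 0" by transfer simp
  show "a - b = a + - b" by transfer simp
  show "(a + b) * c = a * c + b * c" by transfer (simp only: comp_def)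
  show "a * (b + c) = a * b + a * c" by transfer (auto simp only: comp_def)
  show "(0::('a,'b,'c,'d) endo) \<noteq> 1"
  proof transfer
    show "(\<lambda>x. 0::'a \<times> 'b \<times> 'c \<times> 'd) \<noteq> id"
    proof
      assume "(\<lambda>x. 0::'a \<times> 'b \<times> 'c \<times> 'd) = id"
      then have "(0::'a \<times> 'b \<times> 'c \<times> 'd) = (1,0,0,0)" by (metis id_apply)
      then show False by (simp add: zero_prod_def)
    qed
  qed
qed
end




lemma addhom:
  assumes "\<And>x y. f (x + y) = f x + f y"
  shows "f 0 = (0::'b::ab_group_add)" "f (- x) = - f (x::'a::ab_group_add)" "f (x - y) = f x - f y"
proof -
  show z: "f 0 = 0" using assms[of 0 0] by simp
  have n: "f (- u) = - f u" for u
  proof -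
    have "f u + f (- u) = 0" using assms[of u "-u"] z by simp
    then show ?thesis by (metis minus_unique)
  qed
  then show "f (- x) = - f x" .
  show "f (x - y) = f x - f y" using assms[of x "-y"] n[of y] by simp
qed

lemma prod4_plus[simp]: "(a,m,n,b) + (a',m',n',b') = (a+a',m+m',n+n',b+b')"
  by (simp add: plus_prod_def)
lemma prod4_uminus[simp]: "- (a,m,n,b) = (-a,-m,-n,-b)"
  by (simp add: uminus_prod_def)

lemma morita_add_eq[simp]: "morita_add x y = x + y"
  by (cases x; cases y) (simp add: morita_add_def)

lemma morita_zero_eq[simp]: "morita_zero = 0"
  by (simp add: morita_zero_def zero_prod_def)

locale MC =
  fixes lM :: "'a::ring_1 \<Rightarrow> 'm::ab_group_add \<Rightarrow> 'm"
    and rM :: "'m \<Rightarrow> 'b::ring_1 \<Rightarrow> 'm"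
    and lN :: "'b \<Rightarrow> 'n::ab_group_add \<Rightarrow> 'n"
    and rN :: "'n \<Rightarrow> 'a \<Rightarrow> 'n"
    and phi :: "'m \<Rightarrow> 'n \<Rightarrow> 'a"
    and psi :: "'n \<Rightarrow> 'm \<Rightarrow> 'b"
  assumes mc: "morita_context lM rM lN rN phi psi"
begin

lemma lM_addR: "lM a (m + m') = lM a m + lM a m'"
  and lM_addL: "lM (a + a') m = lM a m + lM a' m"
  and lM_mult: "lM (a * a') m = lM a (lM a' m)"
  and lM_one: "lM 1 m = m"
  and rM_addL: "rM (m + m') b = rM m b + rM m' b"
  and rM_addR: "rM m (b + b') = rM m b + rM m b'"
  and rM_mult: "rM (rM m b) b' = rM m (b * b')"
  and rM_one: "rM m 1 = m"
  and lM_rM: "lM a (rM m b) = rM (lM a m) b"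
  and lN_addR: "lN b (n + n') = lN b n + lN b n'"
  and lN_addL: "lN (b + b') n = lN b n + lN b' n"
  and lN_mult: "lN (b * b') n = lN b (lN b' n)"
  and lN_one: "lN 1 n = n"
  and rN_addL: "rN (n + n') a = rN n a + rN n' a"
  and rN_addR: "rN n (a + a') = rN n a + rN n a'"
  and rN_mult: "rN (rN n a) a' = rN n (a * a')"
  and rN_one: "rN n 1 = n"
  and lN_rN: "lN b (rN n a) = rN (lN b n) a"
  and phi_addL: "phi (m + m') n = phi m n + phi m' n"
  and phi_addR: "phi m (n + n') = phi m n + phi m n'"
  and phi_rM: "phi (rM m b) n = phi m (lN b n)"
  and phi_lM: "phi (lM a m) n = a * phi m n"
  and phi_rN: "phi m (rN n a) = phi m n * a"
  and psi_addL: "psi (n + n') m = psi n m + psi n' m"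
  and psi_addR: "psi n (m + m') = psi n m + psi n m'"
  and psi_rN: "psi (rN n a) m = psi n (lM a m)"
  and psi_lN: "psi (lN b n) m = b * psi n m"
  and psi_rM: "psi n (rM m b) = psi n m * b"
  and lM_phi: "lM (phi m n) m' = rM m (psi n m')"
  and lN_psi: "lN (psi n m) n' = rN n (phi m n')"
  using mc unfolding morita_context_def bimodule_def pairing_def by auto

lemmas z1 = addhom[of "lM a", OF lM_addR] addhom[of "\<lambda>a. lM a m", OF lM_addL]
  addhom[of "\<lambda>m. rM m b", OF rM_addL] addhom[of "rM m", OF rM_addR]
  addhom[of "lN b", OF lN_addR] addhom[of "\<lambda>b. lN b n", OF lN_addL]
  addhom[of "\<lambda>n. rN n a", OF rN_addL] addhom[of "rN n", OF rN_addR]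
  addhom[of "\<lambda>m. phi m n", OF phi_addL] addhom[of "phi m", OF phi_addR]
  addhom[of "\<lambda>n. psi n m", OF psi_addL] addhom[of "psi n", OF psi_addR] for a b m n

lemmas laws[simp] = lM_addR lM_addL lM_mult lM_one rM_addL rM_addR rM_mult rM_one lM_rM
  lN_addR lN_addL lN_mult lN_one rN_addL rN_addR rN_mult rN_one lN_rN
  phi_addL phi_addR phi_rM phi_lM phi_rN psi_addL psi_addR psi_rN psi_lN psi_rM lM_phi lN_psi z1

abbreviation "mul \<equiv> morita_mult lM rM lN rN phi psi"

lemma mul_simp[simp]: "mul (a,m,n,b) (a',m',n',b') =
   (a*a' + phi m n', lM a m' + rM m b', rN n a' + lN b n', psi n m' + b*b')"
  by (simp add: morita_mult_def)

lemma mul_assoc: "mul (mul X Y) Z = mul X (mul Y Z)"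
  by (cases X; cases Y; cases Z) (simp add: algebra_simps)

lemma mul_distR: "mul X (Y + Z) = mul X Y + mul X Z"
  by (cases X; cases Y; cases Z) (simp add: algebra_simps)

lemma mul_distL: "mul (X + Y) Z = mul X Z + mul Y Z"
  by (cases X; cases Y; cases Z) (simp add: algebra_simps)

lemma mul_oneL: "mul morita_one X = X"
  by (cases X) (simp add: morita_one_def)

lemma mul_oneR: "mul X morita_one = X"
  by (cases X) (simp add: morita_one_def)

definition L :: "'a \<times> 'm \<times> 'n \<times> 'b \<Rightarrow> ('a,'m,'n,'b) endo" where
  "L X = Abs (mul X)"

lemma rep_L: "rep (L X) = mul X"
  unfolding L_def by (rule Abs_inverse, rule CollectI, intro allI, rule mul_distR)

lemma L_mult: "L (mul X Y) = L X * L Y"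
  by (simp add: rep_inject[symmetric] times_endo.rep_eq rep_L fun_eq_iff mul_assoc)

lemma L_add: "L (X + Y) = L X + L Y"
  by (simp add: rep_inject[symmetric] plus_endo.rep_eq rep_L fun_eq_iff mul_distL)

lemma L_one: "L morita_one = 1"
  by (simp add: rep_inject[symmetric] one_endo.rep_eq rep_L fun_eq_iff mul_oneL)

lemma L_inj: "L X = L Y \<Longrightarrow> X = Y"
  by (metis rep_L mul_oneR)

lemma L_zero: "L 0 = 0"
  using L_add[of 0 0] by simp

lemma L_neg: "L (- X) = - L X"
proof -
  have "L X + L (- X) = 0" using L_add[of X "-X"] L_zero by simp
  then show ?thesis by (metis minus_unique)
qed

lemma L_diff: "L (X - Y) = L X - L Y"
  using L_add[of X "-Y"] L_neg[of Y] by simp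

lemma L_rpow: "L ((mul X ^^ k) morita_one) = (L X)^k"
  by (induction k) (simp_all add: L_one L_mult)

lemma rpow_Suc2: "(mul X ^^ Suc k) morita_one = mul ((mul X ^^ k) morita_one) X"
  by (rule L_inj) (simp add: L_rpow L_mult power_Suc2 power_commutes del: funpow.simps)

lemma R_snc_nil:
  assumes "snc_op morita_zero morita_one morita_add mul X"
  shows "\<exists>k. (mul (X + - mul X X) ^^ k) morita_one = 0"
proof -
  obtain E Q k where e: "mul E E = E" and q: "(mul Q ^^ k) morita_one = 0"
    and c: "mul E Q = mul Q E" and x: "X = E + Q"
    using assms unfolding snc_op_def idem_op_def nil_op_def by auto
  have "snc_op 0 1 (+) (*) (L X)"
    unfolding snc_op_def idem_op_def nil_op_def funpow_pow
    apply (rule exI[of _ "L E"], rule exI[of _ "L Q"])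
    using e q c x by (metis L_add L_mult L_rpow L_zero)
  then obtain j where "(L X - L X * L X)^j = 0" using snc_imp by blast
  then have "L ((mul (X + - mul X X) ^^ j) morita_one) = L 0"
    by (simp add: L_rpow L_add L_neg L_mult L_zero L_diff)
  then show ?thesis using L_inj by blast
qed

lemma R_nil_snc:
  assumes "(mul (X + - mul X X) ^^ k) morita_one = 0"
  shows "snc_op morita_zero morita_one morita_add mul X"
proof -
  let ?x = "L X"
  have "(?x - ?x * ?x)^k = 0" using arg_cong[OF assms, of L]
    by (simp add: L_rpow L_add L_neg L_mult L_zero L_diff)
  then obtain p h where i: "ev p ?x * ev p ?x = ev p ?x" and n: "(?x - ev p ?x)^k = 0"
    using lift_ring by blast
  have "ev p ?x \<in> range L"
    apply (rule ev_in)
    by (auto simp flip: L_add L_mult L_neg L_one L_zero)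
  then obtain F where F: "ev p ?x = L F" by blast
  have fa: "ev p ?x * ?x = ?x * ev p ?x" using ev_comm[of p ?x "[:0,1:]"] by simp
  have cm: "ev p ?x * (?x - ev p ?x) = (?x - ev p ?x) * ev p ?x" using fa by (simp add: algebra_simps)
  have "mul F F = F" using i F by (metis L_inj L_mult)
  moreover have "(mul (X + - F) ^^ k) morita_one = 0"
    using n F by (intro L_inj) (simp add: L_rpow L_add L_neg L_zero L_diff)
  moreover have "mul F (X + - F) = mul (X + - F) F"
    using cm F by (intro L_inj) (simp add: L_mult L_add L_neg L_diff)
  moreover have "X = F + (X + - F)" by simp
  ultimately show ?thesis unfolding snc_op_def idem_op_def nil_op_def
    by (intro exI[of _ F] exI[of _ "X + - F"]) auto
qed

end



definition swp :: "'a \<times> 'm \<times> 'n \<times> 'b \<Rightarrow> 'b \<times> 'n \<times> 'm \<times> 'a" where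
  "swp X = (case X of (a,m,n,b) \<Rightarrow> (b,n,m,a))"

lemma swp_simp[simp]: "swp (a,m,n,b) = (b,n,m,a)" by (simp add: swp_def)

lemma swp_add: "swp (X + Y) = swp X + swp Y"
  by (cases X; cases Y) simp

lemma swp_neg: "swp (- X) = - swp X"
  by (cases X) simp

lemma swp_diff: "swp (X - Y) = swp X - swp Y"
  by (cases X; cases Y) simp

lemma swp_one: "swp (morita_one :: 'a::ring_1 \<times> 'm::ab_group_add \<times> 'n::ab_group_add \<times> 'b::ring_1)
   = morita_one"
  by (simp add: morita_one_def)

lemma swp_zero: "swp 0 = 0"
  by (simp add: zero_prod_def)

lemma trace_iff: "x \<in> trace_ideal f \<longleftrightarrow> (\<exists>(k::nat) ms ns. x = (\<Sum>i<k. f (ms i) (ns i)))"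
  by (auto simp: trace_ideal_def)

lemma prod_list_zero:
  assumes "\<forall>xs. length xs = k \<and> set xs \<subseteq> I \<longrightarrow> prod_list xs = (0::'a::ring_1)"
    and "set ys \<subseteq> I" and "k \<le> length ys"
  shows "prod_list ys = 0"
proof -
  have "length (take k ys) = k" using assms(3) by simp
  moreover have "set (take k ys) \<subseteq> I" using subset_trans[OF set_take_subset assms(2)] .
  ultimately have "prod_list (take k ys) = 0" using assms(1) by blast
  then show ?thesis by (metis append_take_drop_id prod_list.append mult_zero_left)
qed

context MC
begin

lemma mc_swap: "MC lN rN lM rM psi phi"
  using mc unfolding MC_def morita_context_def by auto

lemma swap_mul: "morita_mult lN rN lM rM psi phi (swp X) (swp Y) = swp (mul X Y)"
  by (cases X; cases Y) (simp add: morita_mult_def add.commute)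

lemma swap_pow: "(morita_mult lN rN lM rM psi phi (swp X) ^^ r) morita_one = swp ((mul X ^^ r) morita_one)"
  by (induction r) (simp_all add: swp_one swap_mul)

abbreviation "TA \<equiv> trace_ideal phi"

lemma tr_phi: "phi m n \<in> TA"
  unfolding trace_ideal_def
  by (rule CollectI, rule exI[of _ 1], rule exI[of _ "\<lambda>_. m"], rule exI[of _ "\<lambda>_. n"]) simp

lemma tr_zero: "0 \<in> TA"
  unfolding trace_ideal_def by (rule CollectI, rule exI[of _ 0]) simp

lemma tr_add_phi:
  assumes "x \<in> TA" shows "x + phi m n \<in> TA"
proof -
  obtain k :: nat and ms ns where x: "x = (\<Sum>i<k. phi (ms i) (ns i))"
    using assms unfolding trace_iff by blast
  have "x + phi m n = (\<Sum>i<Suc k. phi ((ms(k:=m)) i) ((ns(k:=n)) i))"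
    unfolding x by (simp add: sum.lessThan_Suc)
  then show ?thesis unfolding trace_iff by (intro exI[of _ "Suc k"] exI[of _ "ms(k:=m)"] exI[of _ "ns(k:=n)"])
qed

lemma tr_add:
  assumes "x \<in> TA" "y \<in> TA" shows "x + y \<in> TA"
proof -
  obtain k :: nat and ms ns where y: "y = (\<Sum>i<k. phi (ms i) (ns i))"
    using assms unfolding trace_iff by blast
  have "x + (\<Sum>i<l. phi (ms i) (ns i)) \<in> TA" for l
  proof (induction l)
    case 0 then show ?case using assms by simp
  next
    case (Suc l)
    then show ?case using tr_add_phi[OF Suc] by (simp add: add.assoc)
  qed
  then show ?thesis using y by simp
qed

lemma tr_neg:
  assumes "x \<in> TA" shows "- x \<in> TA"
proof -
  obtain k :: nat and ms ns where x: "x = (\<Sum>i<k. phi (ms i) (ns i))"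
    using assms unfolding trace_iff by blast
  have "- x = (\<Sum>i<k. phi (- ms i) (ns i))" unfolding x by (simp add: sum_negf)
  then show ?thesis unfolding trace_iff by (intro exI[of _ k] exI[of _ "\<lambda>i. - ms i"] exI[of _ ns])
qed

lemma tr_diff: "x \<in> TA \<Longrightarrow> y \<in> TA \<Longrightarrow> x - y \<in> TA"
  using tr_add[of x "-y"] tr_neg[of y] by simp

lemma tr_lmul:
  assumes "x \<in> TA" shows "z * x \<in> TA"
proof -
  obtain k :: nat and ms ns where x: "x = (\<Sum>i<k. phi (ms i) (ns i))"
    using assms unfolding trace_iff by blast
  have "z * x = (\<Sum>i<k. phi (lM z (ms i)) (ns i))" unfolding x by (simp add: sum_distrib_left)
  then show ?thesis unfolding trace_iff by (intro exI[of _ k] exI[of _ "\<lambda>i. lM z (ms i)"] exI[of _ ns])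
qed

lemma tr_rmul:
  assumes "x \<in> TA" shows "x * z \<in> TA"
proof -
  obtain k :: nat and ms ns where x: "x = (\<Sum>i<k. phi (ms i) (ns i))"
    using assms unfolding trace_iff by blast
  have "x * z = (\<Sum>i<k. phi (ms i) (rN (ns i) z))" unfolding x by (simp add: sum_distrib_right)
  then show ?thesis unfolding trace_iff by (intro exI[of _ k] exI[of _ ms] exI[of _ "\<lambda>i. rN (ns i) z"])
qed

lemma tr_nil:
  assumes "nilpotent_ideal TA" shows "\<exists>N. \<forall>t\<in>TA. t^N = 0"
proof -
  obtain k where k: "\<forall>xs. length xs = k \<and> set xs \<subseteq> TA \<longrightarrow> prod_list xs = 0"
    using assms unfolding nilpotent_ideal_def by blast
  have "t^k = 0" if "t \<in> TA" for t
  proof -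
    have "set (replicate k t) \<subseteq> TA" using that by (cases k) auto
    then show ?thesis using k[rule_format, of "replicate k t"] by (simp add: prod_list_replicate)
  qed
  then show ?thesis by blast
qed

lemma sum_lN: "lN (\<Sum>i<(k::nat). f i) n' = (\<Sum>i<k. lN (f i) n')"
  by (induction k) simp_all

lemma sum_phiR: "phi \<mu> (\<Sum>i<(k::nat). g i) = (\<Sum>i<k. phi \<mu> (g i))"
  by (induction k) simp_all

lemma sum_rM: "rM \<mu> (\<Sum>i<(k::nat). f i) = (\<Sum>i<k. rM \<mu> (f i))"
  by (induction k) simp_all

lemma rpow_Suc2': "(mul X ^^ Suc k) morita_one = mul ((mul X ^^ k) morita_one) X"
  using rpow_Suc2 .

lemma top_zero:
  assumes nilA: "nilpotent_ideal TA" and x: "x \<in> TA" and y: "y \<in> trace_ideal psi"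
  shows "\<exists>r0. \<forall>r\<ge>r0. fst ((mul (x,m,n,y) ^^ r) morita_one) = 0
                   \<and> fst (snd ((mul (x,m,n,y) ^^ r) morita_one)) = 0"
proof -
  obtain kA where kA: "\<forall>xs. length xs = kA \<and> set xs \<subseteq> TA \<longrightarrow> prod_list xs = 0"
    using nilA unfolding nilpotent_ideal_def by blast
  obtain k :: nat and ms ns where yk: "y = (\<Sum>i<k. psi (ns i) (ms i))"
    using y unfolding trace_iff by blast
  define lv where "lv j z \<longleftrightarrow> (\<forall>ys. set ys \<subseteq> TA \<and> kA \<le> length ys + j \<longrightarrow> z * prod_list ys = 0)"
    for j z
  have lv0: "lv 0 z" for z
    unfolding lv_def
  proof (intro allI impI)
    fix ys assume "set ys \<subseteq> TA \<and> kA \<le> length ys + 0"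
    then have "prod_list ys = 0" using prod_list_zero[OF kA] by simp
    then show "z * prod_list ys = 0" by simp
  qed
  have lv_add: "lv j (a + b)" if "lv j a" "lv j b" for j a b
    using that unfolding lv_def by (simp add: distrib_right)
  have lv_zero: "lv j 0" for j unfolding lv_def by simp
  have lv_sum: "lv j (\<Sum>i<kk. f i)" if "\<And>i. i < kk \<Longrightarrow> lv j (f i)" for j and kk :: nat and f
    using that by (induction kk) (simp_all add: lv_zero lv_add)
  have lv_mul: "lv (Suc j) (z * t)" if "lv j z" "t \<in> TA" for j z t
    unfolding lv_def
  proof (intro allI impI)
    fix ys assume a: "set ys \<subseteq> TA \<and> kA \<le> length ys + Suc j"
    have "z * prod_list (t # ys) = 0" using that(1)[unfolded lv_def, rule_format, of "t # ys"] a that(2) by simp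
    then show "z * t * prod_list ys = 0" by (simp add: mult.assoc)
  qed
  have lv_mono: "lv i z" if "lv j z" "i \<le> j" for i j z
    unfolding lv_def
  proof (intro allI impI)
    fix ys assume a: "set ys \<subseteq> TA \<and> kA \<le> length ys + i"
    then have "kA \<le> length ys + j" using that(2) by linarith
    then show "z * prod_list ys = 0" using that(1)[unfolded lv_def, rule_format, of ys] a by blast
  qed
  have lv_kill: "z = 0" if "lv kA z" for z
    using that[unfolded lv_def, rule_format, of "[]"] by simp
  define P where "P r = (mul (x,m,n,y) ^^ r) morita_one" for r
  define \<alpha> where "\<alpha> r = fst (P r)" for r
  define \<mu> where "\<mu> r = fst (snd (P r))" for r
  have rec: "\<alpha> (Suc r) = \<alpha> r * x + phi (\<mu> r) n \<and> \<mu> (Suc r) = lM (\<alpha> r) m + rM (\<mu> r) y" for r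
  proof -
    obtain a1 m1 n1 b1 where Pr: "P r = (a1,m1,n1,b1)" by (cases "P r")
    have "P (Suc r) = mul (P r) (x,m,n,y)" unfolding P_def by (rule rpow_Suc2)
    then show ?thesis unfolding \<alpha>_def \<mu>_def Pr by simp
  qed
  have phiy: "phi \<mu>' (lN y n') = (\<Sum>i<k. phi \<mu>' (ns i) * phi (ms i) n')" for \<mu>' n'
    unfolding yk sum_lN by (simp add: sum_phiR)
  have rMy: "rM \<mu>' y = (\<Sum>i<k. lM (phi \<mu>' (ns i)) (ms i))" for \<mu>'
    unfolding yk sum_rM by simp
  have inv: "lv (r div 2) (\<alpha> r) \<and> (\<forall>n'. lv ((r+1) div 2) (phi (\<mu> r) n'))" for r
  proof (induction r)
    case 0
    have "\<mu> 0 = 0" unfolding \<mu>_def P_def by (simp add: morita_one_def)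
    then show ?case using lv0 lv_zero by simp
  next
    case (Suc r)
    then have a: "lv (r div 2) (\<alpha> r)" and b: "\<And>n'. lv ((r+1) div 2) (phi (\<mu> r) n')" by auto
    have c1: "lv (Suc r div 2) (\<alpha> (Suc r))"
      unfolding rec[THEN conjunct1]
    proof (rule lv_add)
      show "lv (Suc r div 2) (\<alpha> r * x)" using lv_mul[OF a x] by (rule lv_mono) presburger
      show "lv (Suc r div 2) (phi (\<mu> r) n)" using b by simp
    qed
    have c2: "lv ((Suc r + 1) div 2) (phi (\<mu> (Suc r)) n')" for n'
      unfolding rec[THEN conjunct2] phi_addL phi_lM phi_rM phiy
    proof (rule lv_add)
      show "lv ((Suc r + 1) div 2) (\<alpha> r * phi m n')" using lv_mul[OF a tr_phi] by (rule lv_mono) presburger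
      show "lv ((Suc r + 1) div 2) (\<Sum>i<k. phi (\<mu> r) (ns i) * phi (ms i) n')"
        by (rule lv_sum, rule lv_mono[OF lv_mul[OF b tr_phi]]) presburger
    qed
    show ?case using c1 c2 by blast
  qed
  have A0: "\<alpha> r = 0" if "2*kA \<le> r" for r
  proof -
    have "kA \<le> r div 2" using that by presburger
    then show ?thesis using inv[of r] lv_mono lv_kill by blast
  qed
  have M0: "phi (\<mu> r) n' = 0" if "2*kA \<le> r" for r n'
  proof -
    have "kA \<le> (r + 1) div 2" using that by presburger
    then show ?thesis using inv[of r] lv_mono lv_kill by blast
  qed
  have "\<alpha> r = 0 \<and> \<mu> r = 0" if r0: "Suc (2*kA) \<le> r" for r
  proof -
    obtain r' where r: "r = Suc r'" and r': "2*kA \<le> r'" using r0 by (cases r) auto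
    have "\<mu> r = lM (\<alpha> r') m + rM (\<mu> r') y" using rec r by simp
    also have "\<dots> = 0" unfolding rMy using A0[OF r'] M0[OF r'] by simp
    finally show ?thesis using A0 r0 by simp
  qed
  then show ?thesis unfolding \<alpha>_def \<mu>_def P_def by blast
qed

end



context MC
begin

lemma diag_pow: "(mul (c,0,0,d) ^^ k) morita_one = (c^k, 0, 0, d^k)"
  by (induction k) (simp_all add: morita_one_def)

lemma fwd:
  assumes "snc_op morita_zero morita_one morita_add mul (c,0,0,d)"
  shows "\<exists>k. (c - c*c)^k = 0 \<and> (d - d*d)^k = 0"
proof -
  obtain k where k: "(mul ((c,0,0,d) + - mul (c,0,0,d) (c,0,0,d)) ^^ k) morita_one = 0"
    using R_snc_nil[OF assms] by blast
  have "(c,0,0,d) + - mul (c,0,0,d) (c,0,0,d) = (c - c*c, 0, 0, d - d*d)" by simp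
  then have "(mul (c - c*c, 0, 0, d - d*d) ^^ k) morita_one = 0" using k by simp
  then have "(c - c*c)^k = 0 \<and> (d - d*d)^k = 0" unfolding diag_pow by (simp add: zero_prod_def)
  then show ?thesis by blast
qed

lemma clean_swap:
  assumes "clean_op morita_one morita_add mul X"
  shows "clean_op morita_one morita_add (morita_mult lN rN lM rM psi phi) (swp X)"
proof -
  obtain E U V where e: "mul E E = E" and uv: "mul U V = morita_one" and vu: "mul V U = morita_one"
    and x: "X = E + U"
    using assms unfolding clean_op_def idem_op_def unit_op_def by auto
  let ?m = "morita_mult lN rN lM rM psi phi"
  have h1: "?m (swp E) (swp E) = swp E" using e by (simp add: swap_mul)
  have h2: "?m (swp U) (swp V) = morita_one" using uv by (simp add: swap_mul swp_one)
  have h3: "?m (swp V) (swp U) = morita_one" using vu by (simp add: swap_mul swp_one)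
  have h4: "swp X = morita_add (swp E) (swp U)" using x by (simp add: swp_add)
  show ?thesis unfolding clean_op_def idem_op_def unit_op_def
    using h1 h2 h3 h4 by blast
qed

lemma top_clean:
  assumes nilA: "nilpotent_ideal TA" and csA: "CSNC TYPE('a)"
    and cl: "clean_op morita_one morita_add mul X"
  shows "\<exists>k. (fst X - fst X * fst X)^k = 0"
proof -
  obtain E U V where e: "mul E E = E" and uv: "mul U V = morita_one" and vu: "mul V U = morita_one"
    and x: "X = E + U"
    using cl unfolding clean_op_def idem_op_def unit_op_def by auto
  obtain e em en eb where E: "E = (e,em,en,eb)" by (cases E)
  obtain u um un ub where U: "U = (u,um,un,ub)" by (cases U)
  obtain v vm vn vb where V: "V = (v,vm,vn,vb)" by (cases V)
  have ee: "e*e + phi em en = e" using e unfolding E by simp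
  have uv1: "u*v + phi um vn = 1" using uv unfolding U V by (simp add: morita_one_def)
  have vu1: "v*u + phi vm un = 1" using vu unfolding U V by (simp add: morita_one_def)
  obtain N where N: "\<forall>t\<in>TA. t^N = 0" using tr_nil[OF nilA] by blast
  have t: "e - e*e = phi em en" using ee by (simp add: algebra_simps)
  then have "(e - e*e)^N = 0" using N tr_phi by simp
  then obtain p h where f1: "ev p e * ev p e = ev p e" and f2: "ev p e - e = (e - e*e) * h"
    using lift_ring by blast
  define f where "f = ev p e"
  define d where "d = f - e"
  have dT: "d \<in> TA" unfolding d_def f_def f2 t by (rule tr_rmul[OF tr_phi])
  define u' where "u' = u - d"
  have r1: "u' * v = 1 - (phi um vn + d * v)" unfolding u'_def using uv1 by (simp add: algebra_simps)
  have r2: "v * u' = 1 - (phi vm un + v * d)" unfolding u'_def using vu1 by (simp add: algebra_simps)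
  have s1: "(phi um vn + d * v)^N = 0" using N tr_add[OF tr_phi tr_rmul[OF dT]] by blast
  have s2: "(phi vm un + v * d)^N = 0" using N tr_add[OF tr_phi tr_lmul[OF dT]] by blast
  have un: "unit_op 1 (*) u'" by (rule unit_of[OF r1 s1 r2 s2])
  have fx: "fst X = f + u'" unfolding x E U u'_def d_def by simp
  have "clean_op 1 (+) (*) (fst X)" unfolding clean_op_def idem_op_def
    using f1 un fx f_def by blast
  then have "snc_op 0 1 (+) (*) (fst X)" using csA unfolding CSNC_def CSNC_op_def by blast
  then show ?thesis using snc_imp by blast
qed

lemma tl_pow: "fst ((mul Y ^^ r) morita_one) - (fst Y)^r \<in> TA"
proof (induction r)
  case 0 then show ?case by (simp add: morita_one_def tr_zero)
next
  case (Suc r)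
  obtain a1 m1 n1 b1 where P: "(mul Y ^^ r) morita_one = (a1,m1,n1,b1)"
    by (cases "(mul Y ^^ r) morita_one")
  obtain y1 y2 y3 y4 where Y: "Y = (y1,y2,y3,y4)" by (cases Y)
  have IH: "a1 - y1^r \<in> TA" using Suc P Y by simp
  have "fst ((mul Y ^^ Suc r) morita_one) - (fst Y)^Suc r = y1 * (a1 - y1^r) + phi y2 n1"
    using P Y by (simp add: algebra_simps)
  then show ?case using tr_add[OF tr_lmul[OF IH] tr_phi] by simp
qed

lemma pow_sub: "s \<in> TA \<Longrightarrow> (c - s)^r - c^r \<in> TA"
proof (induction r)
  case 0 then show ?case by (simp add: tr_zero)
next
  case (Suc r)
  have "(c - s)^Suc r - c^Suc r = c * ((c - s)^r - c^r) - s * (c - s)^r"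
    by (simp add: algebra_simps)
  then show ?case using tr_diff[OF tr_lmul[OF Suc.IH[OF Suc.prems]] tr_rmul[OF Suc.prems]] by simp
qed

lemma tl_in:
  assumes "(fst X - fst X * fst X)^k = 0" and "k \<le> r"
  shows "fst ((mul (X - mul X X) ^^ r) morita_one) \<in> TA"
proof -
  obtain a m n b where X: "X = (a,m,n,b)" by (cases X)
  define c where "c = a - a*a"
  have c0: "c^r = 0"
  proof -
    have "c^r = c^k * c^(r-k)" using assms(2) by (simp add: power_add[symmetric])
    then show ?thesis using assms(1) X c_def by simp
  qed
  have fy: "fst (X - mul X X) = c - phi m n" unfolding X c_def by (simp add: algebra_simps)
  let ?P = "fst ((mul (X - mul X X) ^^ r) morita_one)"
  have "?P = (?P - (fst (X - mul X X))^r) + ((c - phi m n)^r - c^r)" using c0 fy by simp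
  then show ?thesis using tr_add[OF tl_pow pow_sub[OF tr_phi]] by metis
qed

lemma knil:
  assumes nA: "nilpotent_ideal TA" and nB: "nilpotent_ideal (trace_ideal psi)"
    and x: "x \<in> TA" and y: "y \<in> trace_ideal psi"
  shows "\<exists>r0. (mul (x,m,n,y) ^^ r0) morita_one = 0"
proof -
  interpret sw: MC lN rN lM rM psi phi by (rule mc_swap)
  obtain r1 where r1: "\<forall>r\<ge>r1. fst ((mul (x,m,n,y) ^^ r) morita_one) = 0
                   \<and> fst (snd ((mul (x,m,n,y) ^^ r) morita_one)) = 0"
    using top_zero[OF nA x y] by blast
  obtain r2 where r2: "\<forall>r\<ge>r2. fst ((sw.mul (y,n,m,x) ^^ r) morita_one) = 0
                   \<and> fst (snd ((sw.mul (y,n,m,x) ^^ r) morita_one)) = 0"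
    using sw.top_zero[OF nB y x] by blast
  have sw: "(sw.mul (y,n,m,x) ^^ r) morita_one = swp ((mul (x,m,n,y) ^^ r) morita_one)" for r
    using swap_pow[where X="(x,m,n,y)" and r=r] by simp
  obtain p1 p2 p3 p4 where P: "(mul (x,m,n,y) ^^ (r1 + r2)) morita_one = (p1,p2,p3,p4)"
    by (cases "(mul (x,m,n,y) ^^ (r1 + r2)) morita_one")
  have "p1 = 0 \<and> p2 = 0" using r1[rule_format, of "r1+r2"] P by simp
  moreover have "p4 = 0 \<and> p3 = 0" using r2[rule_format, of "r1+r2"] P sw[of "r1+r2"] by simp
  ultimately show ?thesis using P by (intro exI[of _ "r1+r2"]) (simp add: zero_prod_def)
qed

end




theorem theorem2p20:
  fixes lM :: "'a::ring_1 \<Rightarrow> 'm::ab_group_add \<Rightarrow> 'm"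
    and rM :: "'m \<Rightarrow> 'b::ring_1 \<Rightarrow> 'm"
    and lN :: "'b \<Rightarrow> 'n::ab_group_add \<Rightarrow> 'n"
    and rN :: "'n \<Rightarrow> 'a \<Rightarrow> 'n"
    and phi :: "'m \<Rightarrow> 'n \<Rightarrow> 'a"
    and psi :: "'n \<Rightarrow> 'm \<Rightarrow> 'b"
  assumes "morita_context lM rM lN rN phi psi"
    and "nilpotent_ideal (trace_ideal phi)"
    and "nilpotent_ideal (trace_ideal psi)"
  shows "morita_CSNC lM rM lN rN phi psi \<longleftrightarrow> CSNC TYPE('a) \<and> CSNC TYPE('b)"
proof -
  interpret MC lM rM lN rN phi psi using assms(1) by (rule MC.intro)
  interpret sw: MC lN rN lM rM psi phi by (rule mc_swap)
  show ?thesis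
  proof
    assume R: "morita_CSNC lM rM lN rN phi psi"
    have Rs: "snc_op morita_zero morita_one morita_add mul X"
      if "clean_op morita_one morita_add mul X" for X
      using R that unfolding morita_CSNC_def CSNC_op_def by blast
    have A: "CSNC TYPE('a)" unfolding CSNC_def CSNC_op_def
    proof (intro allI impI)
      fix a :: 'a assume "clean_op 1 (+) (*) a"
      then obtain e u v where e: "e*e = e" and uv: "u*v = 1" and vu: "v*u = 1" and a: "a = e + u"
        unfolding clean_op_def idem_op_def unit_op_def by blast
      have h1: "mul (e,0,0,0) (e,0,0,0) = (e,0,0,0)" using e by simp
      have h2: "mul (u,0,0,1) (v,0,0,1) = morita_one" using uv by (simp add: morita_one_def)
      have h3: "mul (v,0,0,1) (u,0,0,1) = morita_one" using vu by (simp add: morita_one_def)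
      have h4: "(a,0,0,1) = morita_add (e,0,0,0) (u,0,0,1)" using a by simp
      have "clean_op morita_one morita_add mul (a,0,0,1)" unfolding clean_op_def idem_op_def unit_op_def
        using h1 h2 h3 h4 by blast
      then obtain k where "(a - a*a)^k = 0" using fwd[OF Rs] by blast
      then show "snc_op 0 1 (+) (*) a" by (rule nil_snc)
    qed
    have B: "CSNC TYPE('b)" unfolding CSNC_def CSNC_op_def
    proof (intro allI impI)
      fix b :: 'b assume "clean_op 1 (+) (*) b"
      then obtain e u v where e: "e*e = e" and uv: "u*v = 1" and vu: "v*u = 1" and b: "b = e + u"
        unfolding clean_op_def idem_op_def unit_op_def by blast
      have h1: "mul (0,0,0,e) (0,0,0,e) = (0,0,0,e)" using e by simp
      have h2: "mul (1,0,0,u) (1,0,0,v) = morita_one" using uv by (simp add: morita_one_def)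
      have h3: "mul (1,0,0,v) (1,0,0,u) = morita_one" using vu by (simp add: morita_one_def)
      have h4: "(1,0,0,b) = morita_add (0,0,0,e) (1,0,0,u)" using b by simp
      have "clean_op morita_one morita_add mul (1,0,0,b)" unfolding clean_op_def idem_op_def unit_op_def
        using h1 h2 h3 h4 by blast
      then obtain k where "(b - b*b)^k = 0" using fwd[OF Rs] by blast
      then show "snc_op 0 1 (+) (*) b" by (rule nil_snc)
    qed
    show "CSNC TYPE('a) \<and> CSNC TYPE('b)" using A B by blast
  next
    assume "CSNC TYPE('a) \<and> CSNC TYPE('b)"
    then have cA: "CSNC TYPE('a)" and cB: "CSNC TYPE('b)" by auto
    show "morita_CSNC lM rM lN rN phi psi" unfolding morita_CSNC_def CSNC_op_def
    proof (intro allI impI)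
      fix X assume cl: "clean_op morita_one morita_add mul X"
      obtain ka where ka: "(fst X - fst X * fst X)^ka = 0"
        using top_clean[OF assms(2) cA cl] by blast
      obtain kb where kb: "(fst (swp X) - fst (swp X) * fst (swp X))^kb = 0"
        using sw.top_clean[OF assms(3) cB clean_swap[OF cl]] by blast
      define r where "r = ka + kb"
      define Y where "Y = X - mul X X"
      define W where "W = (mul Y ^^ r) morita_one"
      have w1: "fst W \<in> TA" unfolding W_def Y_def by (rule tl_in[OF ka]) (simp add: r_def)
      have "fst ((sw.mul (swp X - sw.mul (swp X) (swp X)) ^^ r) morita_one) \<in> trace_ideal psi"
        by (rule sw.tl_in[OF kb]) (simp add: r_def)
      moreover have "swp X - sw.mul (swp X) (swp X) = swp Y"
        unfolding Y_def by (simp add: swp_diff swap_mul)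
      ultimately have w4: "fst (swp W) \<in> trace_ideal psi"
        unfolding W_def using swap_pow[where X=Y and r=r] by simp
      obtain w1' w2 w3 w4' where Wd: "W = (w1',w2,w3,w4')" by (cases W)
      have "w1' \<in> TA" "w4' \<in> trace_ideal psi" using w1 w4 Wd by simp_all
      then obtain r0 where r0: "(mul W ^^ r0) morita_one = 0"
        using knil[OF assms(2) assms(3)] Wd by metis
      have "L ((mul Y ^^ (r*r0)) morita_one) = L 0"
        using arg_cong[OF r0, of L] unfolding W_def by (simp add: L_rpow power_mult)
      then have "(mul Y ^^ (r*r0)) morita_one = 0" by (rule L_inj)
      then show "snc_op morita_zero morita_one morita_add mul X"
        using R_nil_snc[where X=X and k="r*r0"] unfolding Y_def by simp
    qed
  qed
qed


end
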